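(* For all $n\geq 0$: $d_8(3n+2)\equiv 0\pmod 9$ and $d_8(9n+3)\equiv 0\pmod 9$.
   Context: For each integer $k\geq 1$, the numbers $d_k(n)$ are defined by $\sum_{n\geq 0} d_k(n)q^n = \frac{f_2^k}{f_1^{3k+1}}$, where $f_r = \prod_{i\geq 1}(1-q^{ri})$. *)

theory Defs
  imports "HOL-Computational_Algebra.Formal_Power_Series"
begin

text \<open>f_r = prod_{i>=1} (1 - q^(r i)) as a formal power series over the rationals.
  For r >= 1 the n-th coefficient of the infinite product equals the n-th coefficient
  of the finite product over i = 1..n (factors with i > n only affect degrees > n).\<close>
definition f_prod :: "nat \<Rightarrow> rat fps" where
  "f_prod r = Abs_fps (\<lambda>n. fps_nth (\<Prod>i\<in>{1..n}. (1 - fps_X ^ (r * i))) n)"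

definition d :: "nat \<Rightarrow> nat \<Rightarrow> rat" where
  "d k n = fps_nth (f_prod 2 ^ k * inverse (f_prod 1 ^ (3 * k + 1))) n"

end

theory Submission
  imports Defs "HOL-Computational_Algebra.Polynomial"
begin

unbundle fps_syntax

definition cm :: "int \<Rightarrow> nat \<Rightarrow> int fps \<Rightarrow> int fps \<Rightarrow> bool" where
  "cm m N f g \<longleftrightarrow> (\<forall>i\<le>N. m dvd (f $ i - g $ i))"

lemma cm_refl[simp]: "cm m N f f" by (simp add: cm_def)

lemma cm_sym: "cm m N f g \<Longrightarrow> cm m N g f"
proof -
  assume a: "cm m N f g"
  { fix i assume i: "i \<le> N"
    have "g $ i - f $ i = - (f $ i - g $ i)" by simp
    hence "m dvd g $ i - f $ i" using a i unfolding cm_def by (simp only: dvd_minus_iff) }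
  thus ?thesis unfolding cm_def by blast
qed

lemma cm_trans: "cm m N f g \<Longrightarrow> cm m N g h \<Longrightarrow> cm m N f h"
proof -
  assume a: "cm m N f g" "cm m N g h"
  { fix i assume i: "i \<le> N"
    have "f $ i - h $ i = (f $ i - g $ i) + (g $ i - h $ i)" by simp
    hence "m dvd f $ i - h $ i" using a i unfolding cm_def by (metis dvd_add) }
  thus ?thesis unfolding cm_def by blast
qed

lemma cm_eq: "f = g \<Longrightarrow> cm m N f g" by simp

lemma cm_0: "cm 0 N f g \<Longrightarrow> cm m N f g"
  unfolding cm_def by simp

lemma cm_dvd: "m dvd m' \<Longrightarrow> cm m' N f g \<Longrightarrow> cm m N f g"
  unfolding cm_def using dvd_trans by blast

lemma cm_diff0: "cm m N f g \<longleftrightarrow> cm m N (f - g) 0"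
  unfolding cm_def by simp

lemma cm_add: "cm m N f f' \<Longrightarrow> cm m N g g' \<Longrightarrow> cm m N (f + g) (f' + g')"
  unfolding cm_def
proof (intro allI impI)
  fix i assume a: "\<forall>i\<le>N. m dvd f $ i - f' $ i" "\<forall>i\<le>N. m dvd g $ i - g' $ i" "i \<le> N"
  have "(f + g) $ i - (f' + g') $ i = (f $ i - f' $ i) + (g $ i - g' $ i)" by simp
  thus "m dvd (f + g) $ i - (f' + g') $ i" using a by (metis dvd_add)
qed

lemma cm_neg: "cm m N f f' \<Longrightarrow> cm m N (- f) (- f')"
proof -
  assume a: "cm m N f f'"
  { fix i assume i: "i \<le> N"
    have "(- f) $ i - (- f') $ i = - (f $ i - f' $ i)" by simp
    hence "m dvd (- f) $ i - (- f') $ i" using a i unfolding cm_def by (simp only: dvd_minus_iff) }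
  thus ?thesis unfolding cm_def by blast
qed

lemma cm_sub: "cm m N f f' \<Longrightarrow> cm m N g g' \<Longrightarrow> cm m N (f - g) (f' - g')"
proof -
  assume a: "cm m N f f'" "cm m N g g'"
  have "cm m N (f + - g) (f' + - g')" using a by (intro cm_add cm_neg)
  thus ?thesis by (simp only: diff_conv_add_uminus)
qed

lemma cm_zero_mult: "cm m N h 0 \<Longrightarrow> cm m N (f * h) 0"
proof -
  assume a: "cm m N h 0"
  { fix i assume i: "i \<le> N"
    have "\<And>k. k \<in> {0..i} \<Longrightarrow> m dvd f $ k * h $ (i - k)"
    proof -
      fix k assume "k \<in> {0..i}"
      hence "i - k \<le> N" using i by simp
      hence "m dvd h $ (i - k)" using a unfolding cm_def by simp
      thus "m dvd f $ k * h $ (i - k)" by (rule dvd_mult)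
    qed
    hence "m dvd (\<Sum>k=0..i. f $ k * h $ (i-k))" by (rule dvd_sum)
    hence "m dvd (f * h) $ i - 0 $ i" by (simp add: fps_mult_nth) }
  thus ?thesis unfolding cm_def by blast
qed

lemma cm_mult: "cm m N f f' \<Longrightarrow> cm m N g g' \<Longrightarrow> cm m N (f * g) (f' * g')"
proof -
  assume a: "cm m N f f'" "cm m N g g'"
  have d1: "cm m N (g - g') 0" using a(2) by (simp only: cm_diff0[symmetric])
  have d2: "cm m N (f - f') 0" using a(1) by (simp only: cm_diff0[symmetric])
  have "cm m N (f * (g - g') + g' * (f - f')) (0 + 0)"
    by (intro cm_add cm_zero_mult d1 d2)
  moreover have "f * (g - g') + g' * (f - f') = f * g - f' * g'" by (simp add: algebra_simps)
  ultimately have "cm m N (f * g - f' * g') 0" by simp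
  thus ?thesis by (simp only: cm_diff0[symmetric])
qed

lemma cm_power: "cm m N f g \<Longrightarrow> cm m N (f ^ k) (g ^ k)"
proof (induction k)
  case 0 thus ?case by simp
next
  case (Suc k) thus ?case using cm_mult[of m N f g "f^k" "g^k"] by simp
qed

lemma cm_mult2: "cm a N f 0 \<Longrightarrow> cm b N g 0 \<Longrightarrow> cm (a*b) N (f * g) 0"
proof -
  assume x: "cm a N f 0" "cm b N g 0"
  { fix i assume i: "i \<le> N"
    have "\<And>k. k \<in> {0..i} \<Longrightarrow> (a*b) dvd f $ k * g $ (i - k)"
    proof -
      fix k assume "k \<in> {0..i}"
      hence "i - k \<le> N" "k \<le> N" using i by auto
      hence "b dvd g $ (i - k)" "a dvd f $ k" using x unfolding cm_def by simp_all
      thus "(a*b) dvd f $ k * g $ (i - k)" by (simp add: mult_dvd_mono)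
    qed
    hence "(a*b) dvd (\<Sum>k=0..i. f $ k * g $ (i-k))" by (rule dvd_sum)
    hence "(a*b) dvd (f * g) $ i - 0 $ i" by (simp add: fps_mult_nth) }
  thus ?thesis unfolding cm_def by blast
qed

lemma cm_const_mult: "cm m N (fps_const m * h) 0"
  unfolding cm_def by (simp only: fps_mult_left_const_nth) simp

lemma cm_cube: "cm 3 N f g \<Longrightarrow> cm 9 N (f ^ 3) (g ^ 3)"
proof -
  assume a: "cm 3 N f g"
  hence d: "cm 3 N (f - g) 0" by (simp only: cm_diff0[symmetric])
  have e: "f^2 + f*g + g^2 = (f - g) * (f - g) + fps_const 3 * (f * g)"
    by (simp add: algebra_simps power2_eq_square fps_numeral_fps_const[symmetric])
  have "cm 3 N ((f - g) * (f - g) + fps_const 3 * (f * g)) (0 + 0)"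
    by (intro cm_add cm_zero_mult d cm_const_mult)
  hence "cm 3 N (f^2 + f*g + g^2) 0" using e by simp
  from cm_mult2[OF d this] have "cm (3*3) N ((f - g) * (f^2 + f*g + g^2)) 0" .
  moreover have "(f - g) * (f^2 + f*g + g^2) = f^3 - g^3"
    by (simp add: algebra_simps power2_eq_square power3_eq_cube)
  ultimately have "cm 9 N (f^3 - g^3) 0" by simp
  thus ?thesis by (simp only: cm_diff0[symmetric])
qed

lemma cm_X_high: "N < e \<Longrightarrow> cm m N (fps_X ^ e * f) 0"
  unfolding cm_def by (simp add: fps_X_power_mult_nth)

lemma cm_cancel:
  assumes U: "U $ 0 = 1" and c: "cm m N (A * U) (B * U)"
  shows "cm m N A B"
proof -
  define H where "H = A - B"
  have "A * U - B * U = H * U" by (simp add: H_def algebra_simps)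
  hence c': "cm m N (H * U) 0" using iffD1[OF cm_diff0 c] by simp
  have "\<forall>i. i \<le> N \<longrightarrow> m dvd H $ i"
  proof (intro allI)
    fix i show "i \<le> N \<longrightarrow> m dvd H $ i"
    proof (induction i rule: less_induct)
      case (less i)
      show ?case
      proof
        assume iN: "i \<le> N"
        have ii: "{0..i} = insert i {0..<i}" by auto
        have "(H * U) $ i = (\<Sum>k\<in>insert i {0..<i}. H $ k * U $ (i-k))"
          by (simp only: fps_mult_nth ii)
        also have "\<dots> = H $ i * U $ (i - i) + (\<Sum>k\<in>{0..<i}. H $ k * U $ (i-k))"
          by (rule sum.insert) auto
        also have "\<dots> = H $ i + (\<Sum>k\<in>{0..<i}. H $ k * U $ (i-k))" using U by simp
        finally have eq: "H $ i = (H * U) $ i - (\<Sum>k\<in>{0..<i}. H $ k * U $ (i-k))" by simp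
        have "m dvd (H * U) $ i" using c' iN by (simp add: cm_def)
        moreover have "m dvd (\<Sum>k\<in>{0..<i}. H $ k * U $ (i-k))"
        proof (rule dvd_sum)
          fix k assume "k \<in> {0..<i}"
          hence "k < i" "k \<le> N" using iN by auto
          hence "m dvd H $ k" using less.IH by blast
          thus "m dvd H $ k * U $ (i - k)" by simp
        qed
        ultimately show "m dvd H $ i" by (simp add: eq)
      qed
    qed
  qed
  thus ?thesis by (simp add: cm_def H_def)
qed

lemma cm_sum: "(\<And>j. j \<in> A \<Longrightarrow> cm m N (f j) (g j)) \<Longrightarrow> cm m N (\<Sum>j\<in>A. f j) (\<Sum>j\<in>A. g j)"
proof -
  assume a: "\<And>j. j \<in> A \<Longrightarrow> cm m N (f j) (g j)"
  { fix i assume i: "i \<le> N"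
    have "(\<Sum>j\<in>A. f j) $ i - (\<Sum>j\<in>A. g j) $ i = (\<Sum>j\<in>A. f j $ i - g j $ i)"
      by (simp only: fps_sum_nth sum_subtractf)
    moreover have "m dvd (\<Sum>j\<in>A. f j $ i - g j $ i)"
    proof (rule dvd_sum)
      fix j assume "j \<in> A" thus "m dvd f j $ i - g j $ i" using a i unfolding cm_def by blast
    qed
    ultimately have "m dvd (\<Sum>j\<in>A. f j) $ i - (\<Sum>j\<in>A. g j) $ i" by simp }
  thus ?thesis unfolding cm_def by blast
qed

definition fsupp :: "(nat \<Rightarrow> bool) \<Rightarrow> int fps \<Rightarrow> bool" where
  "fsupp P f \<longleftrightarrow> (\<forall>i. f $ i \<noteq> 0 \<longrightarrow> P i)"

lemma fsupp_mono: "fsupp P f \<Longrightarrow> (\<And>i. P i \<Longrightarrow> Q i) \<Longrightarrow> fsupp Q f"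
  unfolding fsupp_def by blast

lemma fsupp_mult: "fsupp P f \<Longrightarrow> fsupp Q g \<Longrightarrow> fsupp (\<lambda>n. \<exists>a b. n = a + b \<and> P a \<and> Q b) (f * g)"
proof -
  assume a: "fsupp P f" "fsupp Q g"
  { fix n assume nz: "(f * g) $ n \<noteq> 0"
    have "\<exists>k\<in>{0..n}. f $ k * g $ (n-k) \<noteq> 0"
    proof (rule ccontr)
      assume "\<not> ?thesis"
      hence "(\<Sum>k=0..n. f $ k * g $ (n-k)) = 0" by (intro sum.neutral) blast
      thus False using nz by (simp add: fps_mult_nth)
    qed
    then obtain k where k: "k \<le> n" "f $ k \<noteq> 0" "g $ (n-k) \<noteq> 0" by auto
    have "P k" "Q (n-k)" using a k unfolding fsupp_def by blast+
    hence "\<exists>a b. n = a + b \<and> P a \<and> Q b" using k(1) by (intro exI[of _ k] exI[of _ "n-k"]) simp }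
  thus ?thesis unfolding fsupp_def by blast
qed

lemma fsupp_sum: "(\<And>j. j \<in> A \<Longrightarrow> fsupp P (f j)) \<Longrightarrow> fsupp P (\<Sum>j\<in>A. f j)"
proof -
  assume a: "\<And>j. j \<in> A \<Longrightarrow> fsupp P (f j)"
  { fix n assume nz: "(\<Sum>j\<in>A. f j) $ n \<noteq> 0"
    have "\<exists>j\<in>A. f j $ n \<noteq> 0"
    proof (rule ccontr)
      assume "\<not> ?thesis"
      hence "(\<Sum>j\<in>A. f j $ n) = 0" by (intro sum.neutral) blast
      thus False using nz by (simp add: fps_sum_nth)
    qed
    hence "P n" using a unfolding fsupp_def by blast }
  thus ?thesis unfolding fsupp_def by blast
qed

fun qb :: "'a::comm_ring_1 \<Rightarrow> nat \<Rightarrow> nat \<Rightarrow> 'a" where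
  "qb x 0 j = (if j = 0 then 1 else 0)"
| "qb x (Suc m) 0 = 1"
| "qb x (Suc m) (Suc j) = qb x m j + x ^ Suc j * qb x m (Suc j)"

fun tn :: "nat \<Rightarrow> nat" where
  "tn 0 = 0"
| "tn (Suc k) = tn k + Suc k"

definition tri :: "nat \<Rightarrow> nat \<Rightarrow> nat" where
  "tri a j = (if j \<le> a then tn (a - j) else tn (j - a - 1))"

fun pr :: "'a::comm_ring_1 \<Rightarrow> nat \<Rightarrow> 'a" where
  "pr x 0 = 1"
| "pr x (Suc k) = pr x k * (1 - x ^ Suc k)"

fun pa1 :: "'a::comm_ring_1 \<Rightarrow> 'a \<Rightarrow> nat \<Rightarrow> 'a" where
  "pa1 x z 0 = 1"
| "pa1 x z (Suc a) = pa1 x z a * (z + x ^ Suc a)"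

fun pb :: "'a::comm_ring_1 \<Rightarrow> 'a \<Rightarrow> nat \<Rightarrow> 'a" where
  "pb x z 0 = 1"
| "pb x z (Suc b) = pb x z b * (1 + z * x ^ Suc b)"

lemma qb_0_right[simp]: "qb x m 0 = 1"
  by (cases m) auto

lemma qb_above: "m < j \<Longrightarrow> qb x m j = 0"
proof (induction m arbitrary: j)
  case 0 thus ?case by simp
next
  case (Suc m)
  then obtain k where k: "j = Suc k" "m < k" by (cases j) auto
  thus ?case using Suc.IH[of k] Suc.IH[of "Suc k"] by simp
qed

lemma tn_pred: "tn (k - 1) + k = tn k"
  by (cases k) auto

lemma sum_shift_mult:
  fixes A :: "nat \<Rightarrow> 'a::comm_ring_1"
  assumes A: "A (Suc M) = 0"
  shows "(\<Sum>j\<le>M. A j * z ^ j) * (u + v * z) =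
         (\<Sum>j\<le>Suc M. (u * A j + v * (if j = 0 then 0 else A (j - 1))) * z ^ j)"
proof -
  have "(\<Sum>j\<le>M. A j * z ^ j) * (u + v * z) =
        (\<Sum>j\<le>M. u * A j * z ^ j) + (\<Sum>j\<le>M. v * A j * z ^ Suc j)"
    by (simp add: sum_distrib_right sum_distrib_left sum.distrib algebra_simps)
  also have "(\<Sum>j\<le>M. u * A j * z ^ j) = (\<Sum>j\<le>Suc M. u * A j * z ^ j)"
    using A by simp
  also have "(\<Sum>j\<le>M. v * A j * z ^ Suc j) =
             (\<Sum>j\<le>Suc M. v * (if j = 0 then 0 else A (j - 1)) * z ^ j)"
    by (subst sum.atMost_Suc_shift) simp
  finally show ?thesis by (simp add: sum.distrib[symmetric] algebra_simps)
qed

lemma pb_shift: "pb x z (Suc b) = (1 + z * x) * pb x (z * x) b"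
proof (induction b)
  case 0 thus ?case by simp
next
  case (Suc b)
  have "pb x z (Suc (Suc b)) = pb x z (Suc b) * (1 + z * x ^ Suc (Suc b))" by simp
  also have "\<dots> = (1 + z * x) * (pb x (z * x) b * (1 + (z * x) * x ^ Suc b))"
    using Suc by (simp add: algebra_simps)
  finally show ?case by simp
qed

lemma cauchy: "(1 + z) * pb x z b = (\<Sum>j\<le>Suc b. qb x (Suc b) j * x ^ tn (j - 1) * z ^ j)"
proof (induction b arbitrary: z)
  case 0
  show ?case by (simp add: numeral_2_eq_2)
next
  case (Suc b)
  define A where "A j = qb x (Suc b) j * x ^ tn (j - 1) * x ^ j" for j
  have A0: "A (Suc (Suc b)) = 0" by (simp add: A_def qb_above)
  have "(1 + z) * pb x z (Suc b) = ((1 + z * x) * pb x (z * x) b) * (1 + 1 * z)"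
    unfolding pb_shift by (simp add: algebra_simps)
  also have "\<dots> = (\<Sum>j\<le>Suc b. A j * z ^ j) * (1 + 1 * z)"
    by (simp only: Suc.IH) (simp add: A_def power_mult_distrib algebra_simps)
  also have "\<dots> = (\<Sum>j\<le>Suc (Suc b). (1 * A j + 1 * (if j = 0 then 0 else A (j - 1))) * z ^ j)"
    by (rule sum_shift_mult[of A "Suc b", OF A0])
  also have "\<dots> = (\<Sum>j\<le>Suc (Suc b). qb x (Suc (Suc b)) j * x ^ tn (j - 1) * z ^ j)"
  proof (rule sum.cong[OF refl])
    fix j
    show "(1 * A j + 1 * (if j = 0 then 0 else A (j - 1))) * z ^ j =
          qb x (Suc (Suc b)) j * x ^ tn (j - 1) * z ^ j"
    proof (cases j)
      case 0 thus ?thesis by (simp add: A_def)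
    next
      case (Suc k)
      have e: "x ^ tn (k - 1) * x ^ k = x ^ tn k" using tn_pred[of k] by (simp add: power_add[symmetric])
      have "A (Suc k) + A k = qb x (Suc b) (Suc k) * x ^ tn k * x ^ Suc k + qb x (Suc b) k * (x ^ tn (k - 1) * x ^ k)"
        unfolding A_def by (simp add: mult.assoc)
      also have "\<dots> = qb x (Suc b) (Suc k) * x ^ tn k * x ^ Suc k + qb x (Suc b) k * x ^ tn k"
        by (simp only: e)
      also have "\<dots> = (qb x (Suc b) k + x ^ Suc k * qb x (Suc b) (Suc k)) * x ^ tn k"
        by (simp add: algebra_simps)
      finally have "A (Suc k) + A k = (qb x (Suc b) k + x ^ Suc k * qb x (Suc b) (Suc k)) * x ^ tn k" .
      thus ?thesis using Suc by simp
    qed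
  qed
  finally show ?case .
qed

lemma tri_zero: "tri 0 j = tn (j - 1)"
  by (simp add: tri_def)

lemma tri_shift: "tri (Suc a) (Suc k) = tri a k"
  by (simp add: tri_def)

lemma tri_step: "Suc a + tri a (Suc k) = Suc k + tri (Suc a) (Suc k)"
proof (cases "Suc k \<le> a")
  case True
  then obtain d where d: "a = Suc k + d" by (metis le_add_diff_inverse)
  thus ?thesis by (simp add: tri_def)
next
  case False
  show ?thesis
  proof (cases "k = a")
    case True thus ?thesis by (simp add: tri_def)
  next
    case False
    with \<open>\<not> Suc k \<le> a\<close> obtain d where d: "k = Suc a + d" by (metis le_add_diff_inverse not_less_eq_eq le_neq_implies_less less_eq_Suc_le)
    thus ?thesis by (simp add: tri_def)
  qed
qed

lemma qbin_main:
  "(z + 1) * pa1 x z a * pb x z b = (\<Sum>j\<le>a+b+1. qb x (a+b+1) j * x ^ tri a j * z ^ j)"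
proof (induction a)
  case 0
  show ?case using cauchy[of z x b] by (simp add: tri_zero algebra_simps)
next
  case (Suc a)
  define M where "M = a + b + 1"
  define A where "A j = qb x M j * x ^ tri a j" for j
  have A0: "A (Suc M) = 0" by (simp add: A_def qb_above)
  have "(z + 1) * pa1 x z (Suc a) * pb x z b = ((z + 1) * pa1 x z a * pb x z b) * (x ^ Suc a + 1 * z)"
    by (simp add: algebra_simps)
  also have "\<dots> = (\<Sum>j\<le>M. A j * z ^ j) * (x ^ Suc a + 1 * z)"
    by (simp only: Suc.IH) (simp add: A_def M_def)
  also have "\<dots> = (\<Sum>j\<le>Suc M. (x ^ Suc a * A j + 1 * (if j = 0 then 0 else A (j - 1))) * z ^ j)"
    by (rule sum_shift_mult[of A M, OF A0])
  also have "\<dots> = (\<Sum>j\<le>Suc M. qb x (Suc M) j * x ^ tri (Suc a) j * z ^ j)"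
  proof (rule sum.cong[OF refl])
    fix j
    show "(x ^ Suc a * A j + 1 * (if j = 0 then 0 else A (j - 1))) * z ^ j =
          qb x (Suc M) j * x ^ tri (Suc a) j * z ^ j"
    proof (cases j)
      case 0 thus ?thesis by (simp add: A_def tri_def power_add[symmetric] algebra_simps)
    next
      case (Suc k)
      have e: "x ^ Suc a * x ^ tri a (Suc k) = x ^ Suc k * x ^ tri (Suc a) (Suc k)"
        using tri_step[of a k] by (simp only: power_add[symmetric])
      have "x ^ Suc a * A (Suc k) + A k =
            qb x M (Suc k) * (x ^ Suc a * x ^ tri a (Suc k)) + qb x M k * x ^ tri (Suc a) (Suc k)"
        unfolding A_def tri_shift by (simp only: mult_ac)
      also have "\<dots> = qb x M (Suc k) * (x ^ Suc k * x ^ tri (Suc a) (Suc k)) + qb x M k * x ^ tri (Suc a) (Suc k)"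
        by (simp only: e)
      also have "\<dots> = (qb x M k + x ^ Suc k * qb x M (Suc k)) * x ^ tri (Suc a) (Suc k)"
        by (simp only: distrib_right distrib_left mult_ac add.commute)
      finally have "x ^ Suc a * A (Suc k) + A k = (qb x M k + x ^ Suc k * qb x M (Suc k)) * x ^ tri (Suc a) (Suc k)" .
      thus ?thesis using Suc by simp
    qed
  qed
  finally show ?case by (simp add: M_def)
qed

lemma qb_prod: "j \<le> m \<Longrightarrow> qb x m j * pr x j * pr x (m - j) = pr x m"
proof (induction m arbitrary: j)
  case 0 thus ?case by simp
next
  case (Suc m)
  show ?case
  proof (cases j)
    case 0 thus ?thesis by simp
  next
    case (Suc k)
    have k: "k \<le> m" using Suc.prems Suc by simp
    have I1: "qb x m k * pr x k * pr x (m - k) = pr x m" using Suc.IH[OF k] .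
    show ?thesis
    proof (cases "Suc k \<le> m")
      case True
      have I2: "qb x m (Suc k) * pr x (Suc k) * pr x (m - Suc k) = pr x m" using Suc.IH[OF True] .
      have mk: "Suc m - Suc k = Suc (m - Suc k)" "m - k = Suc (m - Suc k)" using True by auto
      have "qb x (Suc m) j * pr x j * pr x (Suc m - j) =
            qb x m k * pr x k * pr x (m - k) * (1 - x ^ Suc k) +
            x ^ Suc k * (qb x m (Suc k) * pr x (Suc k) * pr x (m - Suc k)) * (1 - x ^ Suc (m - Suc k))"
        using Suc mk by (simp add: algebra_simps)
      also have "\<dots> = pr x m * (1 - x ^ Suc k + x ^ Suc k * (1 - x ^ Suc (m - Suc k)))"
        by (simp only: I1 I2) (simp add: algebra_simps)
      also have "x ^ Suc k * (1 - x ^ Suc (m - Suc k)) = x ^ Suc k - x ^ Suc m"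
      proof -
        have "Suc k + Suc (m - Suc k) = Suc m" using True by simp
        hence "x ^ Suc k * x ^ Suc (m - Suc k) = x ^ Suc m" by (metis power_add)
        thus ?thesis by (simp add: right_diff_distrib)
      qed
      finally show ?thesis by simp
    next
      case False
      hence km: "k = m" using k by simp
      have "qb x (Suc m) j * pr x j * pr x (Suc m - j) = (qb x m m * pr x m * pr x (m - m)) * (1 - x ^ Suc m)"
        using Suc km by (simp add: qb_above algebra_simps)
      thus ?thesis using I1 km by simp
    qed
  qed
qed

lemma pa1_poly: "poly (pa1 x z a) w = pa1 (poly x w) (poly z w) a"
  by (induction a) auto

lemma pb_poly: "poly (pb x z b) w = pb (poly x w) (poly z w) b"
  by (induction b) auto

lemma qb_const: "qb [:y:] m j = [:qb y m j:]"
proof (induction m arbitrary: j)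
  case 0 thus ?case by (simp add: one_pCons)
next
  case (Suc m)
  show ?case
  proof (cases j)
    case 0 thus ?thesis by (simp add: one_pCons)
  next
    case (Suc k) thus ?thesis using Suc.IH by (simp add: poly_const_pow)
  qed
qed

lemma coeff_lin_pow:
  "coeff ([:-1, 1:] ^ j :: 'a::comm_ring_1 poly) 0 = (-1) ^ j \<and>
   coeff ([:-1, 1:] ^ j :: 'a poly) 1 = - of_nat j * (-1) ^ j"
proof (induction j)
  case 0 thus ?case by simp
next
  case (Suc j)
  have e: "[:-1, 1:] ^ Suc j = pCons (-1) [:1:] * ([:-1, 1:] ^ j :: 'a poly)" by simp
  show ?case unfolding e using Suc by (simp add: coeff_pCons algebra_simps)
qed

lemma coeff_const_mult: "coeff ([:c:] * p) k = c * coeff p k"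
  by simp

lemma pa1_neg1: "pa1 y (-1) n = (-1) ^ n * pr y n"
  by (induction n) (auto simp: algebra_simps)

lemma pb_neg1: "pb y (-1) n = pr y n"
  by (induction n) (auto simp: algebra_simps)

lemma jacobi_finite:
  fixes y :: "'a::comm_ring_1"
  shows "(-1) ^ n * (pr y n)^2 =
    (\<Sum>j\<le>n+n+1. qb y (n+n+1) j * y ^ tri n j * (- of_nat j * (-1) ^ j))"
proof -
  let ?z = "[:-1, 1:] :: 'a poly"
  let ?x = "[:y:]"
  have m: "(?z + 1) * pa1 ?x ?z n * pb ?x ?z n = (\<Sum>j\<le>n+n+1. qb ?x (n+n+1) j * ?x ^ tri n j * ?z ^ j)"
    by (rule qbin_main)
  have l: "(?z + 1) * pa1 ?x ?z n * pb ?x ?z n = pCons 0 (pa1 ?x ?z n * pb ?x ?z n)"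
    by (simp add: one_pCons mult.assoc)
  have "coeff (pCons 0 (pa1 ?x ?z n * pb ?x ?z n)) 1 = poly (pa1 ?x ?z n * pb ?x ?z n) 0"
    by (simp add: poly_0_coeff_0)
  also have "\<dots> = pa1 y (-1) n * pb y (-1) n" by (simp add: pa1_poly pb_poly)
  also have "\<dots> = (-1) ^ n * (pr y n)^2" by (simp add: pa1_neg1 pb_neg1 power2_eq_square)
  finally have L: "coeff ((?z + 1) * pa1 ?x ?z n * pb ?x ?z n) 1 = (-1) ^ n * (pr y n)^2"
    using l by simp
  have c1: "coeff ([:-1, 1:] ^ j :: 'a poly) (Suc 0) = - of_nat j * (-1) ^ j" for j
    using conjunct2[OF coeff_lin_pow[where 'a='a and j=j]] by simp
  have "coeff (\<Sum>j\<le>n+n+1. qb ?x (n+n+1) j * ?x ^ tri n j * ?z ^ j) 1 =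
        (\<Sum>j\<le>n+n+1. qb y (n+n+1) j * y ^ tri n j * (- of_nat j * (-1) ^ j))"
    by (simp only: coeff_sum) (rule sum.cong[OF refl], simp add: qb_const poly_const_pow c1 ac_simps)
  thus ?thesis using L m by simp
qed

fun po :: "nat \<Rightarrow> int fps" where
  "po 0 = 1"
| "po (Suc k) = po k * (1 - fps_X ^ (2 * k + 1))"

definition sq :: "nat \<Rightarrow> nat \<Rightarrow> nat" where
  "sq n j = (if j \<le> n then (n - j)^2 else (j - n)^2)"

lemma two_tn: "2 * tn k = k * (k + 1)"
  by (induction k) (auto simp: algebra_simps)

lemma two_tri: "2 * tri n j + j = n + sq n j"
proof (cases "j \<le> n")
  case True
  define k where "k = n - j"
  have k: "n = j + k" using True by (simp add: k_def)
  have "2 * tn k + j = j + k + k^2" using two_tn[of k] by (simp add: power2_eq_square algebra_simps)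
  thus ?thesis using k True by (simp add: tri_def sq_def)
next
  case False
  define k where "k = j - n - 1"
  have k: "j = n + 1 + k" using False by (simp add: k_def)
  have "2 * tn k + j = n + (k + 1)^2" using two_tn[of k] k by (simp add: power2_eq_square algebra_simps)
  thus ?thesis using k False by (simp add: tri_def sq_def)
qed

lemma pa1_gauss: "pa1 (fps_X ^ 2) (- fps_X) n = (- fps_X) ^ n * po n"
proof (induction n)
  case 0 thus ?case by simp
next
  case (Suc n)
  have "(fps_X ^ 2) ^ Suc n = (fps_X :: int fps) ^ (2 * Suc n)"
    by (rule power_mult[symmetric])
  also have "2 * Suc n = Suc (2 * n + 1)" by simp
  finally have "(fps_X ^ 2) ^ Suc n = (fps_X :: int fps) * fps_X ^ (2 * n + 1)"
    by (simp only: power_Suc)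
  thus ?case using Suc by (simp add: algebra_simps)
qed

lemma pb_gauss: "(1 - fps_X) * pb (fps_X ^ 2) (- fps_X) n = po (Suc n)"
proof (induction n)
  case 0 thus ?case by simp
next
  case (Suc n)
  have "(fps_X ^ 2) ^ Suc n * fps_X = (fps_X :: int fps) ^ (2 * Suc n) * fps_X ^ 1"
    by (simp only: power_mult[symmetric] power_one_right)
  also have "\<dots> = fps_X ^ (2 * Suc n + 1)" by (simp only: power_add[symmetric])
  finally have "(fps_X ^ 2) ^ Suc n * fps_X = (fps_X :: int fps) ^ (2 * Suc n + 1)" .
  have "(1 - fps_X) * pb (fps_X ^ 2) (- fps_X) (Suc n) =
        ((1 - fps_X) * pb (fps_X ^ 2) (- fps_X) n) * (1 + (- fps_X) * (fps_X ^ 2) ^ Suc n)"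
    by (simp only: pb.simps mult.assoc)
  also have "\<dots> = po (Suc n) * (1 - (fps_X ^ 2) ^ Suc n * fps_X)"
    by (simp only: Suc) (simp add: algebra_simps)
  also have "\<dots> = po (Suc n) * (1 - fps_X ^ (2 * Suc n + 1))"
    by (simp only: \<open>(fps_X ^ 2) ^ Suc n * fps_X = (fps_X :: int fps) ^ (2 * Suc n + 1)\<close>)
  finally show ?case by simp
qed

lemma gauss_finite:
  "(-1) ^ n * (po n * po (Suc n)) =
    (\<Sum>j\<le>n+n+1. of_int ((-1) ^ j) * qb (fps_X ^ 2) (n+n+1) j * fps_X ^ sq n j)"
proof -
  let ?x = "fps_X ^ 2 :: int fps"
  let ?z = "- fps_X :: int fps"
  have m: "(?z + 1) * pa1 ?x ?z n * pb ?x ?z n = (\<Sum>j\<le>n+n+1. qb ?x (n+n+1) j * ?x ^ tri n j * ?z ^ j)"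
    by (rule qbin_main)
  have "(?z + 1) * pa1 ?x ?z n * pb ?x ?z n = ((- fps_X) ^ n * po n) * ((1 - fps_X) * pb ?x ?z n)"
    by (simp only: pa1_gauss) (simp add: algebra_simps)
  also have "\<dots> = ((-1) ^ n * fps_X ^ n * po n) * po (Suc n)"
    by (simp only: pb_gauss power_minus[of "fps_X :: int fps"])
  also have "\<dots> = fps_X ^ n * ((-1) ^ n * (po n * po (Suc n)))"
    by (simp only: mult_ac)
  finally have L: "(?z + 1) * pa1 ?x ?z n * pb ?x ?z n = fps_X ^ n * ((-1) ^ n * (po n * po (Suc n)))" .
  have T: "qb ?x (n+n+1) j * ?x ^ tri n j * ?z ^ j =
        fps_X ^ n * (of_int ((-1) ^ j) * qb ?x (n+n+1) j * fps_X ^ sq n j)" for j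
  proof -
    have "?x ^ tri n j * ?z ^ j = fps_X ^ (2 * tri n j) * ((-1) ^ j * fps_X ^ j)"
      by (simp only: power_mult[symmetric] power_minus[of "fps_X :: int fps"])
    also have "\<dots> = (-1) ^ j * fps_X ^ (2 * tri n j + j)"
      by (simp only: power_add mult_ac)
    also have "\<dots> = (-1) ^ j * (fps_X ^ n * fps_X ^ sq n j)"
      by (simp only: two_tri power_add)
    also have "(-1) ^ j = (of_int ((-1) ^ j) :: int fps)" by simp
    finally have e: "?x ^ tri n j * ?z ^ j = of_int ((-1) ^ j) * (fps_X ^ n * fps_X ^ sq n j)" .
    have "qb ?x (n+n+1) j * ?x ^ tri n j * ?z ^ j = qb ?x (n+n+1) j * (?x ^ tri n j * ?z ^ j)"
      by (simp only: mult.assoc)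
    also have "\<dots> = qb ?x (n+n+1) j * (of_int ((-1) ^ j) * (fps_X ^ n * fps_X ^ sq n j))"
      by (simp only: e)
    also have "\<dots> = fps_X ^ n * (of_int ((-1) ^ j) * qb ?x (n+n+1) j * fps_X ^ sq n j)"
      by (simp only: mult_ac)
    finally show ?thesis .
  qed
  have "(\<Sum>j\<le>n+n+1. qb ?x (n+n+1) j * ?x ^ tri n j * ?z ^ j) =
        (\<Sum>j\<le>n+n+1. fps_X ^ n * (of_int ((-1) ^ j) * qb ?x (n+n+1) j * fps_X ^ sq n j))"
    by (simp only: T)
  also have "\<dots> = fps_X ^ n * (\<Sum>j\<le>n+n+1. of_int ((-1) ^ j) * qb ?x (n+n+1) j * fps_X ^ sq n j)"
    by (simp only: sum_distrib_left)
  finally have "fps_X ^ n * ((-1) ^ n * (po n * po (Suc n))) =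
      fps_X ^ n * (\<Sum>j\<le>n+n+1. of_int ((-1) ^ j) * qb ?x (n+n+1) j * fps_X ^ sq n j)"
    using L m by simp
  moreover have "(fps_X :: int fps) ^ n \<noteq> 0" by simp
  ultimately show ?thesis by (simp only: mult_cancel_left) simp
qed

lemma po_pr: "po k * pr (fps_X ^ 2) k = pr fps_X (2 * k)"
proof (induction k)
  case 0 thus ?case by simp
next
  case (Suc k)
  have e: "2 * Suc k = Suc (Suc (2 * k))" by simp
  have "(fps_X ^ 2) ^ Suc k = (fps_X :: int fps) ^ (2 * Suc k)"
    by (rule power_mult[symmetric])
  hence "(fps_X ^ 2) ^ Suc k = (fps_X :: int fps) ^ Suc (Suc (2 * k))" by simp
  thus ?case using Suc[symmetric] unfolding e by (simp add: algebra_simps)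
qed

lemma Xr_pow: "(fps_X ^ r :: int fps) ^ k = fps_X ^ (r * k)"
  by (simp add: power_mult)

lemma pr_nth0: "1 \<le> r \<Longrightarrow> pr (fps_X ^ r :: int fps) k $ 0 = 1"
proof (induction k)
  case 0 thus ?case by simp
next
  case (Suc k)
  have "((fps_X ^ r :: int fps) ^ Suc k) $ 0 = 0" using Suc.prems by (simp add: Xr_pow)
  thus ?case using Suc by simp
qed

lemma cm_mult_1mX: "N < e \<Longrightarrow> cm m N (f * (1 - fps_X ^ e)) f"
proof -
  assume e: "N < e"
  have "cm m N (f - fps_X ^ e * f) (f - 0)" by (intro cm_sub cm_refl cm_X_high e)
  moreover have "f * (1 - fps_X ^ e) = f - fps_X ^ e * f" by (simp add: algebra_simps)
  ultimately show ?thesis by simp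
qed

lemma pr_stab:
  assumes r: "1 \<le> r" and k: "N \<le> k"
  shows "cm 0 N (pr (fps_X ^ r :: int fps) k) (pr (fps_X ^ r) N)"
  using k
proof (induction k rule: dec_induct)
  case base thus ?case by simp
next
  case (step m)
  have "1 * Suc m \<le> r * Suc m" using r by (rule mult_le_mono1)
  hence a: "Suc m \<le> r * Suc m" by (simp only: mult_1)
  have "N < Suc m" using step.hyps by simp
  hence "N < r * Suc m" using a by (rule less_le_trans)
  hence c: "cm 0 N (pr (fps_X ^ r) m * (1 - fps_X ^ (r * Suc m))) (pr (fps_X ^ r) m)"
    by (rule cm_mult_1mX)
  have eq: "pr (fps_X ^ r :: int fps) (Suc m) = pr (fps_X ^ r) m * (1 - fps_X ^ (r * Suc m))"
    by (simp only: pr.simps Xr_pow)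
  have "cm 0 N (pr (fps_X ^ r :: int fps) (Suc m)) (pr (fps_X ^ r) m)"
    unfolding eq by (rule c)
  thus ?case using step.IH by (rule cm_trans)
qed

lemma pr_stab2: "1 \<le> r \<Longrightarrow> N \<le> k \<Longrightarrow> N \<le> k' \<Longrightarrow> cm 0 N (pr (fps_X ^ r :: int fps) k) (pr (fps_X ^ r) k')"
  using cm_trans[OF pr_stab[of r N k] cm_sym[OF pr_stab[of r N k']]] by blast

lemma qb_approx:
  assumes r: "1 \<le> r" and j: "j \<le> m" "N \<le> j" "N \<le> m - j"
  shows "cm 0 N (qb (fps_X ^ r :: int fps) m j * pr (fps_X ^ r) N) 1"
proof -
  let ?P = "\<lambda>k. pr (fps_X ^ r :: int fps) k"
  let ?q = "qb (fps_X ^ r :: int fps) m j"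
  have "cm 0 N (?q * ?P N * ?P N) (?q * ?P j * ?P (m - j))"
    by (intro cm_mult cm_refl pr_stab2 r j) (use j in auto)
  also have "?q * ?P j * ?P (m - j) = ?P m" by (rule qb_prod[OF j(1)])
  finally have "cm 0 N (?q * ?P N * ?P N) (?P m)" .
  moreover have "cm 0 N (?P m) (1 * ?P N)" using pr_stab[OF r, of N m] j by simp
  ultimately have "cm 0 N ((?q * ?P N) * ?P N) (1 * ?P N)" by (rule cm_trans)
  thus ?thesis by (rule cm_cancel[OF pr_nth0[OF r]])
qed

lemma sum_approx:
  fixes w c :: "nat \<Rightarrow> int fps" and e :: "nat \<Rightarrow> nat"
  assumes a: "\<And>j. j \<in> S \<Longrightarrow> N < e j \<or> cm 0 N (c j * Q) 1"
  shows "cm 0 N ((\<Sum>j\<in>S. w j * c j * fps_X ^ e j) * Q) (\<Sum>j\<in>S. w j * fps_X ^ e j)"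
proof -
  have "cm 0 N (\<Sum>j\<in>S. w j * c j * fps_X ^ e j * Q) (\<Sum>j\<in>S. w j * fps_X ^ e j)"
  proof (rule cm_sum)
    fix j assume jS: "j \<in> S"
    show "cm 0 N (w j * c j * fps_X ^ e j * Q) (w j * fps_X ^ e j)"
    proof (cases "N < e j")
      case True
      have 1: "cm 0 N (fps_X ^ e j * (w j * c j * Q)) 0" by (rule cm_X_high[OF True])
      have 2: "cm 0 N (fps_X ^ e j * w j) 0" by (rule cm_X_high[OF True])
      have "cm 0 N (fps_X ^ e j * (w j * c j * Q)) (fps_X ^ e j * w j)"
        using 1 cm_sym[OF 2] by (rule cm_trans)
      thus ?thesis by (simp add: ac_simps)
    next
      case False
      hence "cm 0 N (c j * Q) 1" using a[OF jS] by blast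
      hence "cm 0 N ((w j * fps_X ^ e j) * (c j * Q)) ((w j * fps_X ^ e j) * 1)"
        by (intro cm_mult cm_refl)
      thus ?thesis by (simp add: ac_simps)
    qed
  qed
  thus ?thesis by (simp add: sum_distrib_right)
qed

lemma tn_ge: "k \<le> tn k"
  by (induction k) auto

lemma tri_ge: "(if j \<le> n then n - j else j - n - 1) \<le> tri n j"
  by (simp add: tri_def tn_ge)

lemma fsupp_monom: "fsupp (\<lambda>i. i = e) (of_int k * fps_X ^ e)"
  unfolding fsupp_def by (simp add: fps_of_int[symmetric] del: fps_of_int)

lemma fsupp_const: "fsupp P f \<Longrightarrow> fsupp P (of_int k * f)"
  unfolding fsupp_def by (simp add: fps_of_int[symmetric] del: fps_of_int)

lemma jacobi_approx:
  assumes r: "1 \<le> r"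
  shows "\<exists>J. cm 0 N ((pr (fps_X ^ r :: int fps) N)^3) J \<and> fsupp (\<lambda>i. \<exists>t. i = r * tn t) J"
proof -
  define n where "n = 2 * N + 2"
  define y where "y = (fps_X ^ r :: int fps)"
  define w where "w j = (of_int (- int j * (-1) ^ j) :: int fps)" for j
  have fin: "(-1) ^ n * (pr y n)^2 =
    (\<Sum>j\<le>n+n+1. qb y (n+n+1) j * y ^ tri n j * (- of_nat j * (-1) ^ j))"
    by (rule jacobi_finite)
  have ev: "(-1) ^ n = (1 :: int fps)" by (simp add: n_def)
  have eqS: "(pr y n)^2 = (\<Sum>j\<le>n+n+1. w j * qb y (n+n+1) j * fps_X ^ (r * tri n j))"
    using fin unfolding ev by (simp add: w_def y_def Xr_pow ac_simps)
  have ap: "cm 0 N ((\<Sum>j\<le>n+n+1. w j * qb y (n+n+1) j * fps_X ^ (r * tri n j)) * pr y N)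
                         (\<Sum>j\<le>n+n+1. w j * fps_X ^ (r * tri n j))"
  proof (rule sum_approx)
    fix j assume j: "j \<in> {..n+n+1}"
    show "N < r * tri n j \<or> cm 0 N (qb y (n+n+1) j * pr y N) 1"
    proof (cases "N < r * tri n j")
      case True thus ?thesis by simp
    next
      case False
      have "1 * tri n j \<le> r * tri n j" using r by (rule mult_le_mono1)
      hence "tri n j \<le> r * tri n j" by (simp only: mult_1)
      hence "tri n j \<le> N" using False by linarith
      hence "(if j \<le> n then n - j else j - n - 1) \<le> N" using tri_ge[of j n] by linarith
      hence "N \<le> j" "N \<le> (n+n+1) - j" using j by (auto simp: n_def split: if_splits)
      thus ?thesis unfolding y_def using j by (intro disjI2 qb_approx r) auto
    qed
  qed
  have c1: "cm 0 N ((pr y n)^2 * pr y N) (\<Sum>j\<le>n+n+1. w j * fps_X ^ (r * tri n j))"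
    unfolding eqS by (rule ap)
  have "cm 0 N ((pr y N)^2 * pr y N) ((pr y n)^2 * pr y N)"
    unfolding y_def by (intro cm_mult cm_power cm_refl pr_stab2 r) (simp_all add: n_def)
  from cm_trans[OF this c1] have "cm 0 N ((pr y N)^3) (\<Sum>j\<le>n+n+1. w j * fps_X ^ (r * tri n j))"
    by (simp add: power2_eq_square power3_eq_cube)
  moreover have "fsupp (\<lambda>i. \<exists>t. i = r * tn t) (\<Sum>j\<le>n+n+1. w j * fps_X ^ (r * tri n j))"
  proof (rule fsupp_sum)
    fix j
    show "fsupp (\<lambda>i. \<exists>t. i = r * tn t) (w j * fps_X ^ (r * tri n j))"
      unfolding w_def
      by (rule fsupp_mono[OF fsupp_monom[of "r * tri n j" "- int j * (-1) ^ j"]]) (auto simp: tri_def)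
  qed
  ultimately show ?thesis unfolding y_def by blast
qed

lemma sq_ge: "(if j \<le> n then n - j else j - n) \<le> sq n j"
proof -
  have "k \<le> k^2" for k :: nat by (cases k) (auto simp: power2_eq_square)
  thus ?thesis by (simp add: sq_def)
qed

lemma gauss_approx:
  "\<exists>G. cm 0 N ((pr (fps_X ^ 1 :: int fps) N)^2 * pr (fps_X ^ 2) N) (G * (pr (fps_X ^ 2) N)^2)
      \<and> fsupp (\<lambda>i. \<exists>k. i = k^2) G"
proof -
  define n where "n = 2 * N + 2"
  define Q where "Q = pr (fps_X ^ 2 :: int fps) N"
  define P where "P = pr (fps_X ^ 1 :: int fps) N"
  define G where "G = (\<Sum>j\<le>n+n+1. of_int ((-1) ^ j) * fps_X ^ sq n j :: int fps)"
  have fin: "po n * po (Suc n) =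
    (\<Sum>j\<le>n+n+1. of_int ((-1) ^ j) * qb (fps_X ^ 2) (n+n+1) j * fps_X ^ sq n j)"
    using gauss_finite[of n] by (simp add: n_def)
  have c1: "cm 0 N ((po n * po (Suc n)) * Q) G"
    unfolding fin G_def Q_def
  proof (rule sum_approx)
    fix j assume j: "j \<in> {..n+n+1}"
    show "N < sq n j \<or> cm 0 N (qb (fps_X ^ 2) (n+n+1) j * pr (fps_X ^ 2) N) 1"
    proof (cases "N < sq n j")
      case True thus ?thesis by simp
    next
      case False
      hence "(if j \<le> n then n - j else j - n) \<le> N" using sq_ge[of j n] by linarith
      hence "N \<le> j" "N \<le> (n+n+1) - j" using j by (auto simp: n_def split: if_splits)
      thus ?thesis using j by (intro disjI2 qb_approx) auto
    qed
  qed
  have s1: "cm 0 N P (pr (fps_X ^ 1) (2 * n))" unfolding P_def by (rule pr_stab2) (auto simp: n_def)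
  have s2: "cm 0 N P (pr (fps_X ^ 1) (2 * Suc n))" unfolding P_def by (rule pr_stab2) (auto simp: n_def)
  have s3: "cm 0 N (pr (fps_X ^ 2) n) Q" unfolding Q_def by (rule pr_stab) (auto simp: n_def)
  have s4: "cm 0 N (pr (fps_X ^ 2) (Suc n)) Q" unfolding Q_def by (rule pr_stab) (auto simp: n_def)
  have "cm 0 N (P * P * Q) (pr (fps_X ^ 1) (2 * n) * pr (fps_X ^ 1) (2 * Suc n) * Q)"
    by (intro cm_mult s1 s2 cm_refl)
  also have "pr (fps_X ^ 1) (2 * n) * pr (fps_X ^ 1) (2 * Suc n) * Q =
             (po n * pr (fps_X ^ 2) n) * (po (Suc n) * pr (fps_X ^ 2) (Suc n)) * Q"
  proof -
    have e1: "pr (fps_X ^ 1 :: int fps) (2 * n) = po n * pr (fps_X ^ 2) n"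
      by (simp only: power_one_right po_pr)
    have e2: "pr (fps_X ^ 1 :: int fps) (2 * Suc n) = po (Suc n) * pr (fps_X ^ 2) (Suc n)"
      by (simp only: power_one_right po_pr)
    show ?thesis by (simp only: e1 e2)
  qed
  finally have "cm 0 N (P * P * Q) ((po n * pr (fps_X ^ 2) n) * (po (Suc n) * pr (fps_X ^ 2) (Suc n)) * Q)" .
  moreover have "cm 0 N ((po n * pr (fps_X ^ 2) n) * (po (Suc n) * pr (fps_X ^ 2) (Suc n)) * Q)
                        ((po n * Q) * (po (Suc n) * Q) * Q)"
    by (intro cm_mult s3 s4 cm_refl)
  moreover have "(po n * Q) * (po (Suc n) * Q) * Q = ((po n * po (Suc n)) * Q) * (Q * Q)"
    by (simp add: ac_simps)
  moreover have "cm 0 N (((po n * po (Suc n)) * Q) * (Q * Q)) (G * (Q * Q))"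
    by (intro cm_mult c1 cm_refl)
  ultimately have "cm 0 N (P * P * Q) (G * (Q * Q))" by (metis cm_trans)
  hence "cm 0 N (P^2 * Q) (G * Q^2)" by (simp add: power2_eq_square)
  moreover have "fsupp (\<lambda>i. \<exists>k. i = k^2) G"
    unfolding G_def
  proof (rule fsupp_sum)
    fix j
    show "fsupp (\<lambda>i. \<exists>k. i = k^2) (of_int ((-1) ^ j) * fps_X ^ sq n j)"
      by (rule fsupp_mono[OF fsupp_monom[of "sq n j" "(-1) ^ j"]]) (auto simp: sq_def)
  qed
  ultimately show ?thesis unfolding P_def Q_def by blast
qed

definition mp :: "int fps \<Rightarrow> rat fps" where
  "mp f = Abs_fps (\<lambda>n. of_int (f $ n))"

lemma mp_nth[simp]: "mp f $ n = of_int (f $ n)"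
  by (simp add: mp_def)

lemma mp_mult: "mp (f * g) = mp f * mp g"
  by (simp add: fps_eq_iff fps_mult_nth)

lemma mp_diff: "mp (f - g) = mp f - mp g"
  by (simp add: fps_eq_iff)

lemma mp_one: "mp 1 = 1"
  by (simp add: fps_eq_iff)

lemma mp_X: "mp fps_X = fps_X"
  by (simp add: fps_eq_iff)

lemma mp_power: "mp (f ^ k) = mp f ^ k"
  by (induction k) (simp_all add: mp_one mp_mult)

lemma mp_prod: "mp (\<Prod>i\<in>A. f i) = (\<Prod>i\<in>A. mp (f i))"
  by (induction A rule: infinite_finite_induct) (simp_all add: mp_one mp_mult)

lemma mp_inj: "mp f = mp g \<Longrightarrow> f = g"
  by (simp add: fps_eq_iff)

definition Fi :: "nat \<Rightarrow> int fps" where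
  "Fi r = Abs_fps (\<lambda>n. (\<Prod>i\<in>{1..n}. (1 - fps_X ^ (r * i) :: int fps)) $ n)"

lemma prod_pr: "(\<Prod>i\<in>{1..n}. (1 - fps_X ^ (r * i) :: 'a::comm_ring_1 fps)) = pr (fps_X ^ r) n"
proof (induction n)
  case 0 thus ?case by simp
next
  case (Suc n)
  have "{1..Suc n} = insert (Suc n) {1..n}" by auto
  hence "(\<Prod>i\<in>{1..Suc n}. (1 - fps_X ^ (r * i) :: 'a fps)) =
         (1 - fps_X ^ (r * Suc n)) * (\<Prod>i\<in>{1..n}. (1 - fps_X ^ (r * i)))" by simp
  also have "\<dots> = (1 - fps_X ^ (r * Suc n)) * pr (fps_X ^ r) n" by (simp only: Suc.IH)
  also have "\<dots> = pr (fps_X ^ r :: 'a fps) (Suc n)"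
    by (simp only: pr.simps power_mult mult.commute)
  finally show ?case .
qed

lemma Fi_alt: "Fi r = Abs_fps (\<lambda>n. pr (fps_X ^ r) n $ n)"
  unfolding Fi_def prod_pr ..

lemma f_prod_alt: "f_prod r = Abs_fps (\<lambda>n. pr (fps_X ^ r) n $ n)"
  unfolding f_prod_def prod_pr ..

lemma mp_pr: "mp (pr x n) = pr (mp x) n"
  by (induction n) (simp_all add: mp_one mp_mult mp_diff mp_power)

lemma mp_Fi: "mp (Fi r) = f_prod r"
proof -
  have "mp (Fi r) $ n = f_prod r $ n" for n
  proof -
    have "mp (Fi r) $ n = mp (pr (fps_X ^ r) n) $ n" by (simp add: Fi_alt)
    also have "\<dots> = pr (fps_X ^ r) n $ n" by (simp only: mp_pr mp_power mp_X)
    finally show ?thesis by (simp add: f_prod_alt)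
  qed
  thus ?thesis by (simp add: fps_eq_iff)
qed

lemma Fi_approx: "1 \<le> r \<Longrightarrow> cm 0 N (Fi r) (pr (fps_X ^ r) N)"
proof -
  assume r: "1 \<le> r"
  { fix i assume i: "i \<le> N"
    have "cm 0 i (pr (fps_X ^ r :: int fps) N) (pr (fps_X ^ r) i)" by (rule pr_stab[OF r i])
    hence "pr (fps_X ^ r :: int fps) N $ i = pr (fps_X ^ r) i $ i" by (simp add: cm_def)
    hence "0 dvd Fi r $ i - pr (fps_X ^ r) N $ i" by (simp add: Fi_alt) }
  thus ?thesis by (simp add: cm_def)
qed

lemma int_coeffs:
  assumes e: "A * mp U = mp V" and U: "U $ 0 = 1"
  shows "A $ n \<in> \<int>"
proof (induction n rule: less_induct)
  case (less n)
  have ii: "{0..n} = insert n {0..<n}" by auto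
  have "(A * mp U) $ n = (\<Sum>k\<in>insert n {0..<n}. A $ k * mp U $ (n - k))"
    by (simp only: fps_mult_nth ii)
  also have "\<dots> = A $ n * mp U $ (n - n) + (\<Sum>k\<in>{0..<n}. A $ k * mp U $ (n - k))"
    by (rule sum.insert) auto
  also have "\<dots> = A $ n + (\<Sum>k\<in>{0..<n}. A $ k * of_int (U $ (n - k)))" using U by simp
  finally have "A $ n = of_int (V $ n) - (\<Sum>k\<in>{0..<n}. A $ k * of_int (U $ (n - k)))"
    using e by simp
  moreover have "(\<Sum>k\<in>{0..<n}. A $ k * of_int (U $ (n - k))) \<in> \<int>"
    by (rule Ints_sum) (use less in auto)
  ultimately show ?case by simp
qed

definition D :: "rat fps" where
  "D = f_prod 2 ^ 8 * inverse (f_prod 1 ^ 25)"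

lemma d8: "d 8 n = D $ n"
  by (simp add: d_def D_def)

lemma f_prod_0: "f_prod r $ 0 = 1"
  by (simp add: f_prod_def)

lemma D_eq: "D * f_prod 1 ^ 25 = f_prod 2 ^ 8"
proof -
  have "(f_prod 1 ^ 25) $ 0 \<noteq> 0" by (simp add: fps_power_zeroth f_prod_0)
  hence "inverse (f_prod 1 ^ 25) * f_prod 1 ^ 25 = 1" by (rule inverse_mult_eq_1)
  thus ?thesis by (simp add: D_def mult.assoc)
qed

definition E :: "int fps" where
  "E = Abs_fps (\<lambda>n. \<lfloor>D $ n\<rfloor>)"

lemma D_int: "D $ n \<in> \<int>"
proof (rule int_coeffs)
  show "D * mp (Fi 1 ^ 25) = mp (Fi 2 ^ 8)" unfolding mp_power mp_Fi by (rule D_eq)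
  show "(Fi 1 ^ 25) $ 0 = 1" by (simp add: fps_power_zeroth Fi_def)
qed

lemma mp_E: "mp E = D"
  by (simp add: fps_eq_iff E_def) (metis D_int Ints_cases floor_of_int)

lemma E_nth: "d 8 n = of_int (E $ n)"
  using mp_E by (metis d8 mp_nth)

lemma E_eq: "E * Fi 1 ^ 25 = Fi 2 ^ 8"
  by (rule mp_inj) (simp only: mp_mult mp_power mp_Fi mp_E D_eq)

lemma frob: "cm 3 N ((pr (fps_X ^ r :: int fps) k)^3) (pr (fps_X ^ (3 * r)) k)"
proof (induction k)
  case 0 thus ?case by simp
next
  case (Suc k)
  define y where "y = (fps_X ^ r :: int fps) ^ Suc k"
  have a: "3 * r * Suc k = r * Suc k * 3" by simp
  have y3: "(fps_X ^ (3 * r) :: int fps) ^ Suc k = y ^ 3"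
    unfolding y_def power_mult[symmetric] a ..
  have "(1 - y)^3 - (1 - y^3) = fps_const 3 * (y * y - y)"
    by (simp add: algebra_simps power3_eq_cube fps_numeral_fps_const[symmetric])
  hence "cm 3 N ((1 - y)^3 - (1 - y^3)) 0" by (simp only: cm_const_mult)
  hence k: "cm 3 N ((1 - y)^3) (1 - y^3)" by (rule iffD2[OF cm_diff0])
  have c: "cm 3 N ((pr (fps_X ^ r) k)^3 * (1 - y)^3) (pr (fps_X ^ (3 * r)) k * (1 - y^3))"
    by (rule cm_mult[OF Suc k])
  have e1: "(pr (fps_X ^ r :: int fps) (Suc k))^3 = (pr (fps_X ^ r) k)^3 * (1 - y)^3"
    by (simp only: y_def pr.simps power_mult_distrib)
  have e2: "pr (fps_X ^ (3 * r) :: int fps) (Suc k) = pr (fps_X ^ (3 * r)) k * (1 - y^3)"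
    by (simp only: pr.simps y3)
  show ?case unfolding e1 e2 by (rule c)
qed

lemma fsupp_one: "P 0 \<Longrightarrow> fsupp P 1"
  by (simp add: fsupp_def)

lemma fsupp_dvd_mult: "fsupp (\<lambda>i. p dvd i) f \<Longrightarrow> fsupp (\<lambda>i. p dvd i) g \<Longrightarrow> fsupp (\<lambda>i. p dvd i) (f * g)"
  by (rule fsupp_mono[OF fsupp_mult]) auto

lemma fsupp_pr: "fsupp (\<lambda>i. r dvd i) (pr (fps_X ^ r :: int fps) k)"
proof (induction k)
  case 0 thus ?case by (simp add: fsupp_one)
next
  case (Suc k)
  have "fsupp (\<lambda>i. r dvd i) (1 - (fps_X ^ r :: int fps) ^ Suc k)"
    unfolding fsupp_def Xr_pow by auto
  thus ?case using Suc by (simp only: pr.simps) (rule fsupp_dvd_mult)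
qed

lemma fsupp_pow: "fsupp (\<lambda>i. p dvd i) f \<Longrightarrow> fsupp (\<lambda>i. p dvd i) (f ^ k)"
  by (induction k) (auto intro: fsupp_dvd_mult fsupp_one)

lemma main_cong:
  "\<exists>B C. cm 9 N (E * B) C \<and> fsupp (\<lambda>i. 9 dvd i) B \<and> B $ 0 = 1 \<and>
         fsupp (\<lambda>i. \<exists>k t. i = k^2 + 6 * tn t) C"
proof -
  define P where "P r = pr (fps_X ^ r :: int fps) N" for r
  have a0: "cm 0 N (E * Fi 1 ^ 25) (E * P 1 ^ 25)"
    unfolding P_def by (intro cm_mult cm_refl cm_power Fi_approx) simp
  have a0': "cm 0 N (Fi 2 ^ 8) (P 2 ^ 8)"
    unfolding P_def by (intro cm_power Fi_approx) simp
  have a1: "cm 0 N (E * P 1 ^ 25) (P 2 ^ 8)"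
    using cm_trans[OF cm_sym[OF a0] cm_trans[OF cm_eq[OF E_eq] a0']] .
  obtain G where g: "cm 0 N ((P 1)^2 * P 2) (G * (P 2)^2)" "fsupp (\<lambda>i. \<exists>k. i = k^2) G"
    using gauss_approx[of N] unfolding P_def by blast
  have a2: "cm 0 N ((E * P 1 ^ 25) * ((P 1)^2 * P 2)) (P 2 ^ 8 * (G * (P 2)^2))"
    by (rule cm_mult[OF a1 g(1)])
  have e1: "(E * P 1 ^ 25) * ((P 1)^2 * P 2) = E * P 1 ^ 27 * P 2"
    by (simp add: power_add[symmetric] ac_simps)
  have e2': "P 2 ^ 8 * P 2 ^ 2 = P 2 ^ 9 * P 2"
    by (simp only: power_add[symmetric] power_Suc2[symmetric]) simp
  have e2: "P 2 ^ 8 * (G * (P 2)^2) = G * P 2 ^ 9 * P 2"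
    using e2' by (simp only: ac_simps)
  have a2': "cm 0 N (E * P 1 ^ 27 * P 2) (G * P 2 ^ 9 * P 2)"
    using a2 unfolding e1 e2 .
  have f1: "cm 3 N ((P 1)^3) (P 3)" using frob[of N 1 N] unfolding P_def by simp
  have f2: "cm 3 N ((P 2)^3) (P 6)" using frob[of N 2 N] unfolding P_def by simp
  have f3: "cm 3 N ((P 3)^3) (P 9)" using frob[of N 3 N] unfolding P_def by simp
  have c1: "cm 9 N ((P 1)^9) ((P 3)^3)"
    using cm_cube[OF f1] by (simp add: power_mult[symmetric])
  have c2: "cm 9 N ((P 3)^9) ((P 9)^3)"
    using cm_cube[OF f3] by (simp add: power_mult[symmetric])
  have c1': "cm 3 N ((P 1)^9) ((P 3)^3)" by (rule cm_dvd[OF _ c1]) simp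
  have c3a: "cm 9 N ((P 1)^27) ((P 3)^9)"
    using cm_cube[OF c1'] by (simp add: power_mult[symmetric])
  have c3: "cm 9 N ((P 1)^27) ((P 9)^3)" by (rule cm_trans[OF c3a c2])
  have c4: "cm 9 N ((P 2)^9) ((P 6)^3)"
    using cm_cube[OF f2] by (simp add: power_mult[symmetric])
  have a3: "cm 9 N (E * P 9 ^ 3 * P 2) (E * P 1 ^ 27 * P 2)"
    by (intro cm_mult cm_refl cm_sym[OF c3])
  have a4: "cm 9 N (G * P 2 ^ 9 * P 2) (G * P 6 ^ 3 * P 2)"
    by (intro cm_mult cm_refl c4)
  have a5: "cm 9 N (E * P 9 ^ 3 * P 2) (G * P 6 ^ 3 * P 2)"
    using cm_trans[OF a3 cm_trans[OF cm_0[OF a2'] a4]] .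
  have P0: "P r $ 0 = 1" if "1 \<le> r" for r unfolding P_def by (rule pr_nth0[OF that])
  have a6: "cm 9 N (E * P 9 ^ 3) (G * P 6 ^ 3)"
    by (rule cm_cancel[OF P0 a5]) simp
  obtain J where j: "cm 0 N ((P 6)^3) J" "fsupp (\<lambda>i. \<exists>t. i = 6 * tn t) J"
    using jacobi_approx[of 6 N] unfolding P_def by auto
  have a7: "cm 9 N (E * P 9 ^ 3) (G * J)"
    using cm_trans[OF a6 cm_0[OF cm_mult[OF cm_refl j(1)]]] .
  have sB: "fsupp (\<lambda>i. 9 dvd i) (P 9 ^ 3)"
    unfolding P_def by (intro fsupp_pow) (rule fsupp_pr)
  have B0: "(P 9 ^ 3) $ 0 = 1" by (simp add: fps_power_zeroth P0)
  have sC: "fsupp (\<lambda>i. \<exists>k t. i = k^2 + 6 * tn t) (G * J)"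
    by (rule fsupp_mono[OF fsupp_mult[OF g(2) j(2)]]) blast
  show ?thesis using a7 sB B0 sC by blast
qed

lemma extract9:
  assumes c: "cm 9 N (E * B) C" and sB: "fsupp (\<lambda>i. p dvd i) B" and B0: "B $ 0 = 1"
      and C0: "\<And>i. i \<le> N \<Longrightarrow> i mod p = s \<Longrightarrow> C $ i = 0"
  shows "i \<le> N \<Longrightarrow> i mod p = s \<Longrightarrow> 9 dvd E $ i"
proof (induction i rule: less_induct)
  case (less i)
  have ii: "{0..i} = insert i {0..<i}" by auto
  have "(E * B) $ i = (\<Sum>k\<in>insert i {0..<i}. E $ k * B $ (i - k))"
    by (simp only: fps_mult_nth ii)
  also have "\<dots> = E $ i * B $ (i - i) + (\<Sum>k\<in>{0..<i}. E $ k * B $ (i - k))"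
    by (rule sum.insert) auto
  also have "\<dots> = E $ i + (\<Sum>k\<in>{0..<i}. E $ k * B $ (i - k))" using B0 by simp
  finally have eq: "E $ i = (E * B) $ i - (\<Sum>k\<in>{0..<i}. E $ k * B $ (i - k))" by simp
  have "9 dvd (E * B) $ i - C $ i" using c less.prems(1) by (simp add: cm_def)
  hence "9 dvd (E * B) $ i" using C0[OF less.prems] by simp
  moreover have "9 dvd (\<Sum>k\<in>{0..<i}. E $ k * B $ (i - k))"
  proof (rule dvd_sum)
    fix k assume k: "k \<in> {0..<i}"
    show "9 dvd E $ k * B $ (i - k)"
    proof (cases "B $ (i - k) = 0")
      case True thus ?thesis by simp
    next
      case False
      hence "p dvd (i - k)" using sB by (simp add: fsupp_def)
      then obtain q where q: "i - k = p * q" by (elim dvdE)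
      have "i = k + p * q" using q k by auto
      hence "k mod p = s" using less.prems(2) by simp
      hence "9 dvd E $ k" using less.IH[of k] k less.prems(1) by auto
      thus ?thesis by simp
    qed
  qed
  ultimately show ?case by (simp add: eq)
qed

lemma sq_mod3: "(k::nat)^2 mod 3 \<noteq> 2"
proof -
  have "k^2 mod 3 = ((k mod 3)^2) mod 3" by (simp add: power_mod)
  moreover have "k mod 3 = 0 \<or> k mod 3 = 1 \<or> k mod 3 = 2" by auto
  ultimately show ?thesis by (auto simp: power2_eq_square)
qed

lemma no3: "3 * n + 2 \<noteq> k^2 + 6 * tn t"
proof
  assume h: "3 * n + 2 = k^2 + 6 * tn t"
  have l: "(3 * n + 2) mod 3 = 2" by presburger
  have gen: "\<And>x y::nat. (x + 6 * y) mod 3 = x mod 3" by presburger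
  have r: "(k^2 + 6 * tn t) mod 3 = k^2 mod 3" by (rule gen)
  have "k^2 mod 3 = 2" using h l r by simp
  thus False using sq_mod3 by blast
qed

lemma no9: "9 * n + 3 \<noteq> k^2 + 6 * tn t"
proof
  assume h: "9 * n + 3 = k^2 + 6 * tn t"
  have tt: "6 * tn t = 3 * (t * (t + 1))" using two_tn[of t] by simp
  have l: "(9 * n + 3) mod 3 = 0" by presburger
  have gen: "\<And>x y::nat. (x + 6 * y) mod 3 = x mod 3" by presburger
  have r: "(k^2 + 6 * tn t) mod 3 = k^2 mod 3" by (rule gen)
  have k0: "k^2 mod 3 = 0" using h l r by simp
  have "k mod 3 = 0"
  proof -
    have "k^2 mod 3 = ((k mod 3)^2) mod 3" by (simp add: power_mod)
    moreover have "k mod 3 = 0 \<or> k mod 3 = 1 \<or> k mod 3 = 2" by auto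
    ultimately show ?thesis using k0 by (auto simp: power2_eq_square)
  qed
  hence "3 dvd k" by (simp add: dvd_eq_mod_eq_0)
  then obtain a where a: "k = 3 * a" by (elim dvdE)
  have k2: "k^2 = 9 * a^2" using a by (simp add: power2_eq_square)
  have e: "t * (t + 1) + 3 * a^2 = 3 * n + 1" using h k2 tt by linarith
  have gen2: "\<And>x y::nat. (x + 3 * y) mod 3 = x mod 3" by presburger
  have l2: "(3 * n + 1) mod 3 = 1" by presburger
  have "(t * (t + 1)) mod 3 = (t * (t + 1) + 3 * a^2) mod 3" by (rule gen2[symmetric])
  also have "\<dots> = (3 * n + 1) mod 3" by (simp only: e)
  also have "\<dots> = 1" by (rule l2)
  finally have t1: "(t * (t + 1)) mod 3 = 1" .
  have m1: "(t * (t + 1)) mod 3 = ((t mod 3) * ((t + 1) mod 3)) mod 3" by (rule mod_mult_eq[symmetric])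
  have m2: "(t + 1) mod 3 = (t mod 3 + 1) mod 3" by (rule mod_add_left_eq[symmetric])
  have key: "(t * (t + 1)) mod 3 = ((t mod 3) * ((t mod 3 + 1) mod 3)) mod 3"
    using m1 unfolding m2 .
  have "t mod 3 = 0 \<or> t mod 3 = 1 \<or> t mod 3 = 2" by auto
  moreover have "t mod 3 \<noteq> 0"
  proof
    assume "t mod 3 = 0"
    hence "(t * (t + 1)) mod 3 = 0" using key by simp
    thus False using t1 by simp
  qed
  moreover have "t mod 3 \<noteq> 1"
  proof
    assume "t mod 3 = 1"
    hence "(t * (t + 1)) mod 3 = 2" using key by simp
    thus False using t1 by simp
  qed
  moreover have "t mod 3 \<noteq> 2"
  proof
    assume "t mod 3 = 2"
    hence "(t * (t + 1)) mod 3 = 0" using key by simp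
    thus False using t1 by simp
  qed
  ultimately show False by blast
qed

theorem theorem3p6:
  fixes n :: nat
  shows "(\<exists>m::int. d 8 (3 * n + 2) = 9 * of_int m) \<and>
         (\<exists>m::int. d 8 (9 * n + 3) = 9 * of_int m)"
proof
  obtain B C where bc: "cm 9 (3 * n + 2) (E * B) C" "fsupp (\<lambda>i. 9 dvd i) B" "B $ 0 = 1"
      "fsupp (\<lambda>i. \<exists>k t. i = k^2 + 6 * tn t) C"
    using main_cong[of "3 * n + 2"] by blast
  have sB: "fsupp (\<lambda>i. 3 dvd i) B" by (rule fsupp_mono[OF bc(2)]) auto
  have C0: "C $ i = 0" if "i \<le> 3 * n + 2" "i mod 3 = 2" for i
  proof (rule ccontr)
    assume "C $ i \<noteq> 0"
    then obtain k t where kt: "i = k^2 + 6 * tn t" using bc(4) by (auto simp: fsupp_def)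
    have "i = 3 * (i div 3) + 2" using that(2) by presburger
    hence "3 * (i div 3) + 2 = k^2 + 6 * tn t" using kt by simp
    thus False using no3[of "i div 3" k t] by blast
  qed
  have m: "(3 * n + 2) mod 3 = 2" by presburger
  have "9 dvd E $ (3 * n + 2)"
    using extract9[OF bc(1) sB bc(3) C0 order.refl m] .
  then obtain m where "E $ (3 * n + 2) = 9 * m" by (elim dvdE)
  thus "\<exists>m::int. d 8 (3 * n + 2) = 9 * of_int m" by (auto simp: E_nth)
next
  obtain B C where bc: "cm 9 (9 * n + 3) (E * B) C" "fsupp (\<lambda>i. 9 dvd i) B" "B $ 0 = 1"
      "fsupp (\<lambda>i. \<exists>k t. i = k^2 + 6 * tn t) C"
    using main_cong[of "9 * n + 3"] by blast
  have C0: "C $ i = 0" if "i \<le> 9 * n + 3" "i mod 9 = 3" for i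
  proof (rule ccontr)
    assume "C $ i \<noteq> 0"
    then obtain k t where kt: "i = k^2 + 6 * tn t" using bc(4) by (auto simp: fsupp_def)
    have "i = 9 * (i div 9) + 3" using that(2) by presburger
    hence "9 * (i div 9) + 3 = k^2 + 6 * tn t" using kt by simp
    thus False using no9[of "i div 9" k t] by blast
  qed
  have m: "(9 * n + 3) mod 9 = 3" by presburger
  have "9 dvd E $ (9 * n + 3)"
    using extract9[OF bc(1) bc(2) bc(3) C0 order.refl m] .
  then obtain m where "E $ (9 * n + 3) = 9 * m" by (elim dvdE)
  thus "\<exists>m::int. d 8 (9 * n + 3) = 9 * of_int m" by (auto simp: E_nth)
qed

end
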